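(* Let $m\ge 2$, $n=m+1$, and let $A$ be the $n\times n$ matrix of the star graph with center $1$ and leaves $2,\dots,n$, each node carrying a loop of weight $\sqrt m$: $A_{ii}=\sqrt m$ for all $i$, $A_{1j}=A_{j1}=1$ for $j=2,\dots,n$, and all other entries $0$. Let $d=A\mathbb{1}$ and $M_{\mathrm{NG}}=A-\frac{1}{\mathbb{1}^{\mathsf T}d}dd^{\mathsf T}$. Then the largest eigenvalue of $M_{\mathrm{NG}}$ equals $\sqrt m$, it has multiplicity exactly $m-1$, and its eigenspace is $\{x\in\mathbb{R}^n: x_1=0,\ \sum_{i=1}^n x_i=0\}$. Consequently, for every eigenvector $x$ of $M_{\mathrm{NG}}$ associated with $\sqrt m$, the subgraph induced by $\{i: x_i>0\}$ is connected if and only if this set consists of a single node.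
   Context: $\mathbb{1}$ denotes the all-ones vector. The subgraph induced by a set $S$ of nodes is connected if the graph on vertex set $S$ in which distinct $i,j$ are adjacent iff $A_{ij}>0$ is connected. *)

theory Defs
  imports "Jordan_Normal_Form.Char_Poly"
begin

text \<open>Nodes 1..n of the paper are indices 0..n-1 here; the centre (node 1) is index 0.\<close>

definition star_loop_mat :: "nat \<Rightarrow> real mat" where
  "star_loop_mat m = mat (m+1) (m+1) (\<lambda>(i,j).
      if i = j then sqrt (real m)
      else if i = 0 \<or> j = 0 then 1 else 0)"

definition ones_vec :: "nat \<Rightarrow> real vec" where
  "ones_vec n = vec n (\<lambda>_. 1)"

definition deg_vec :: "real mat \<Rightarrow> real vec" where
  "deg_vec A = A *\<^sub>v ones_vec (dim_row A)"

definition modularity_mat :: "real mat \<Rightarrow> real mat" where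
  "modularity_mat A = A - (1 / (ones_vec (dim_row A) \<bullet> deg_vec A)) \<cdot>\<^sub>m
      mat (dim_row A) (dim_row A) (\<lambda>(i,j). deg_vec A $ i * deg_vec A $ j)"

definition induced_connected :: "real mat \<Rightarrow> nat set \<Rightarrow> bool" where
  "induced_connected A S = (S \<noteq> {} \<and>
     (\<forall>i\<in>S. \<forall>j\<in>S. (i, j) \<in> ({(a, b). a \<in> S \<and> b \<in> S \<and> a \<noteq> b \<and> A $$ (a, b) > 0})\<^sup>*))"

end

theory Submission
  imports Defs
begin

lemma sumA:
  assumes "i < Suc m"
  shows "(\<Sum>j<Suc m. star_loop_mat m $$ (i,j) * f j) =
    (if i = 0 then sqrt (real m) * f 0 + (\<Sum>j<m. f (Suc j)) else f 0 + sqrt (real m) * f i)"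
proof -
  have "(\<Sum>j<Suc m. star_loop_mat m $$ (i,j) * f j) =
     (\<Sum>j<Suc m. (if j = i then sqrt (real m) * f j else 0) + (if i = 0 \<and> j \<noteq> 0 then f j else 0)
          + (if i \<noteq> 0 \<and> j = 0 then f j else 0))"
    by (rule sum.cong, auto simp: star_loop_mat_def assms)
  also have "\<dots> = (\<Sum>j<Suc m. (if j = i then sqrt (real m) * f j else 0)) + (\<Sum>j<Suc m. (if i = 0 \<and> j \<noteq> 0 then f j else 0))
          + (\<Sum>j<Suc m. (if i \<noteq> 0 \<and> j = 0 then f j else 0))" by (simp add: sum.distrib)
  also have "(\<Sum>j<Suc m. (if j = i then sqrt (real m) * f j else 0)) = sqrt (real m) * f i"
    using assms by (simp add: sum.delta')
  also have "(\<Sum>j<Suc m. (if i = 0 \<and> j \<noteq> 0 then f j else 0)) = (if i = 0 then (\<Sum>j<m. f (Suc j)) else 0)"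
    by (simp add: sum.lessThan_Suc_shift del: sum.lessThan_Suc)
  also have "(\<Sum>j<Suc m. (if i \<noteq> 0 \<and> j = 0 then f j else 0)) = (if i \<noteq> 0 then f 0 else 0)"
    by (simp add: sum.lessThan_Suc_shift del: sum.lessThan_Suc)
  finally show ?thesis by auto
qed


definition DD :: "nat \<Rightarrow> real" where "DD m = (real m + 1) * sqrt (real m) + 2 * real m"
definition dg :: "nat \<Rightarrow> nat \<Rightarrow> real" where "dg m i = (if i = 0 then sqrt (real m) + real m else sqrt (real m) + 1)"

lemma A_carr: "star_loop_mat m \<in> carrier_mat (Suc m) (Suc m)"
  by (simp add: star_loop_mat_def)

lemma deg: assumes "i < Suc m" shows "deg_vec (star_loop_mat m) $ i = dg m i"
proof -
  have "deg_vec (star_loop_mat m) $ i = (\<Sum>j<Suc m. star_loop_mat m $$ (i,j) * (\<lambda>_. 1) j)"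
    using assms A_carr[of m] by (simp add: deg_vec_def ones_vec_def scalar_prod_def lessThan_atLeast0)
  also have "\<dots> = dg m i" unfolding sumA[OF assms] dg_def by auto
  finally show ?thesis .
qed

lemma deg_carr: "deg_vec (star_loop_mat m) \<in> carrier_vec (Suc m)"
  using A_carr[of m] by (simp add: deg_vec_def ones_vec_def)

lemma tot: "ones_vec (Suc m) \<bullet> deg_vec (star_loop_mat m) = DD m"
proof -
  have "ones_vec (Suc m) \<bullet> deg_vec (star_loop_mat m) = (\<Sum>i<Suc m. dg m i)"
    using deg_carr[of m] deg[of _ m] by (simp add: ones_vec_def scalar_prod_def lessThan_atLeast0)
  also have "\<dots> = DD m" by (simp add: sum.lessThan_Suc_shift dg_def DD_def algebra_simps del: sum.lessThan_Suc)
  finally show ?thesis .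
qed

lemma M_carr: "modularity_mat (star_loop_mat m) \<in> carrier_mat (Suc m) (Suc m)"
  unfolding modularity_mat_def using A_carr[of m] by (intro minus_carrier_mat; simp)

lemma Mentry: assumes "i < Suc m" "j < Suc m"
  shows "modularity_mat (star_loop_mat m) $$ (i,j) = star_loop_mat m $$ (i,j) - dg m i * dg m j / DD m"
  using assms A_carr[of m] tot[of m] deg[of i m] deg[of j m] by (simp add: modularity_mat_def)

lemma sumM: assumes "i < Suc m"
  shows "(\<Sum>j<Suc m. modularity_mat (star_loop_mat m) $$ (i,j) * f j) =
    (if i = 0 then sqrt (real m) * f 0 + (\<Sum>j<m. f (Suc j)) else f 0 + sqrt (real m) * f i)
    - dg m i * ((sqrt (real m) + real m) * f 0 + (sqrt (real m) + 1) * (\<Sum>j<m. f (Suc j))) / DD m"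
proof -
  have "(\<Sum>j<Suc m. modularity_mat (star_loop_mat m) $$ (i,j) * f j) =
     (\<Sum>j<Suc m. star_loop_mat m $$ (i,j) * f j) - dg m i / DD m * (\<Sum>j<Suc m. dg m j * f j)"
    using assms by (simp add: Mentry sum_subtractf sum_distrib_left algebra_simps)
  also have "(\<Sum>j<Suc m. dg m j * f j) = (sqrt (real m) + real m) * f 0 + (sqrt (real m) + 1) * (\<Sum>j<m. f (Suc j))"
    by (simp add: sum.lessThan_Suc_shift dg_def sum_distrib_left del: sum.lessThan_Suc)
  finally show ?thesis unfolding sumA[OF assms] by simp
qed

lemma mulvec: assumes "x \<in> carrier_vec (Suc m)" "i < Suc m"
  shows "(modularity_mat (star_loop_mat m) *\<^sub>v x) $ i =
    (if i = 0 then sqrt (real m) * x $ 0 + (\<Sum>j<m. x $ (Suc j)) else x $ 0 + sqrt (real m) * x $ i)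
    - dg m i * ((sqrt (real m) + real m) * x $ 0 + (sqrt (real m) + 1) * (\<Sum>j<m. x $ (Suc j))) / DD m"
proof -
  have "(modularity_mat (star_loop_mat m) *\<^sub>v x) $ i = (\<Sum>j<Suc m. modularity_mat (star_loop_mat m) $$ (i,j) * x $ j)"
    using assms M_carr[of m] by (simp add: scalar_prod_def lessThan_atLeast0)
  then show ?thesis using sumM[OF assms(2), of "\<lambda>j. x $ j"] by simp
qed


lemma DD_pos: "m \<ge> 1 \<Longrightarrow> DD m > 0"
  unfolding DD_def by (simp add: add_pos_nonneg)

lemma s_sq: "sqrt (real m) * sqrt (real m) = real m" by simp

lemma eigsp: assumes m: "m \<ge> 1" and x: "x \<in> carrier_vec (Suc m)"
  shows "(modularity_mat (star_loop_mat m) *\<^sub>v x = sqrt (real m) \<cdot>\<^sub>v x) \<longleftrightarrow>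
         (x $ 0 = 0 \<and> (\<Sum>i<Suc m. x $ i) = 0)"
proof
  let ?s = "sqrt (real m)"
  let ?T = "\<Sum>j<m. x $ (Suc j)"
  define c where "c = ((?s + real m) * x $ 0 + (?s + 1) * ?T) / DD m"
  assume eq: "modularity_mat (star_loop_mat m) *\<^sub>v x = ?s \<cdot>\<^sub>v x"
  have e0: "(modularity_mat (star_loop_mat m) *\<^sub>v x) $ 0 = ?s * x $ 0" using eq x by simp
  have e1: "(modularity_mat (star_loop_mat m) *\<^sub>v x) $ 1 = ?s * x $ 1" using eq x m by simp
  have D: "DD m > 0" using DD_pos[OF m] .
  have T: "?T = (?s + real m) * c"
    using e0 mulvec[OF x, of 0] unfolding c_def dg_def by (simp add: algebra_simps)
  have X0: "x $ 0 = (?s + 1) * c"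
    using e1 mulvec[OF x, of 1] m unfolding c_def dg_def by (simp add: algebra_simps)
  have "c * DD m = (?s + real m) * x $ 0 + (?s + 1) * ?T" unfolding c_def using D by simp
  also have "\<dots> = c * (2 * (?s + real m) * (?s + 1))" unfolding T X0 by (simp add: algebra_simps)
  finally have "c * (DD m - 2 * (?s + real m) * (?s + 1)) = 0" by (simp add: algebra_simps)
  moreover have "DD m - 2 * (?s + real m) * (?s + 1) = - ((real m + 1) * ?s + 2 * real m)"
    unfolding DD_def by (simp add: algebra_simps)
  moreover have "(real m + 1) * ?s + 2 * real m > 0" using m by (simp add: add_pos_nonneg)
  ultimately have c0: "c = 0" by simp
  show "x $ 0 = 0 \<and> (\<Sum>i<Suc m. x $ i) = 0"
    using T X0 c0 by (simp add: sum.lessThan_Suc_shift del: sum.lessThan_Suc)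
next
  assume h: "x $ 0 = 0 \<and> (\<Sum>i<Suc m. x $ i) = 0"
  hence T: "(\<Sum>j<m. x $ (Suc j)) = 0" by (simp add: sum.lessThan_Suc_shift del: sum.lessThan_Suc)
  show "modularity_mat (star_loop_mat m) *\<^sub>v x = sqrt (real m) \<cdot>\<^sub>v x"
  proof (rule eq_vecI)
    show "dim_vec (modularity_mat (star_loop_mat m) *\<^sub>v x) = dim_vec (sqrt (real m) \<cdot>\<^sub>v x)"
      using x M_carr[of m] by simp
    fix i assume "i < dim_vec (sqrt (real m) \<cdot>\<^sub>v x)"
    hence i: "i < Suc m" using x by simp
    show "(modularity_mat (star_loop_mat m) *\<^sub>v x) $ i = (sqrt (real m) \<cdot>\<^sub>v x) $ i"
      unfolding mulvec[OF x i] using h T i x by auto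
  qed
qed


definition Pm :: "nat \<Rightarrow> real mat" where
  "Pm m = mat (Suc m) (Suc m) (\<lambda>(i,j). if j = 0 then 1 else if j = m then (if i = 0 then 1 else 0)
      else (if i = j then 1 else 0) - (if i = m then 1 else 0))"

definition Qm :: "nat \<Rightarrow> real mat" where
  "Qm m = mat (Suc m) (Suc m) (\<lambda>(k,j). (if k = 0 then 0 else if k = m then (if j = 0 then 1 else 0)
      else (if j = k then 1 else 0)) + (if k = 0 then 1 else -1) * (if j = 0 then 0 else 1 / real m))"

definition bb :: "nat \<Rightarrow> real" where
  "bb m = 1 - (sqrt (real m) + 1) * (sqrt (real m) + real m) / DD m"
definition lam :: "nat \<Rightarrow> real" where
  "lam m = sqrt (real m) - (sqrt (real m) + real m)^2 / DD m - bb m"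

definition Tm :: "nat \<Rightarrow> real mat" where
  "Tm m = mat (Suc m) (Suc m) (\<lambda>(i,j). if i = j then (if i = 0 then 0 else if i = m then lam m else sqrt (real m))
      else if i = 0 \<and> j = m then bb m else 0)"

lemma sum_shift_delta: assumes "1 \<le> j" "j \<le> m"
  shows "(\<Sum>l<m. if Suc l = j then (1::real) else 0) = 1"
proof -
  have "(\<Sum>l<m. if Suc l = j then (1::real) else 0) = (\<Sum>l<m. if l = j - 1 then (1::real) else 0)"
    using assms by (intro sum.cong) auto
  also have "\<dots> = 1" using assms by simp
  finally show ?thesis .
qed

lemma sumP: assumes "j < Suc m" "m \<ge> 1"
  shows "(\<Sum>l<m. Pm m $$ (Suc l, j)) = (if j = 0 then real m else 0)"
proof -
  have "(\<Sum>l<m. Pm m $$ (Suc l, j)) = (\<Sum>l<m. if j = 0 then 1 else if j = m then 0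
      else (if Suc l = j then 1 else 0) - (if Suc l = m then 1 else 0))"
    using assms by (intro sum.cong) (auto simp: Pm_def)
  also have "\<dots> = (if j = 0 then real m else 0)"
  proof (cases "j = 0 \<or> j = m")
    case True then show ?thesis by auto
  next
    case False
    then have "(\<Sum>l<m. if j = 0 then 1 else if j = m then 0
      else (if Suc l = j then 1 else 0) - (if Suc l = m then 1 else 0)) =
      (\<Sum>l<m. (if Suc l = j then (1::real) else 0)) - (\<Sum>l<m. (if Suc l = m then (1::real) else 0))"
      by (simp add: sum_subtractf)
    also have "\<dots> = 0" using False assms sum_shift_delta[of j m] sum_shift_delta[of m m] by simp
    finally show ?thesis using False by simp
  qed
  finally show ?thesis .
qed

lemma sumQ: assumes "k < Suc m"
  shows "(\<Sum>l<Suc m. Qm m $$ (k,l) * f l) = (if k = 0 then 0 else if k = m then f 0 else f k)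
     + (if k = 0 then 1 else -1) * (\<Sum>l<m. f (Suc l)) / real m"
proof -
  have "(\<Sum>l<Suc m. Qm m $$ (k,l) * f l) = (\<Sum>l<Suc m. (if k = 0 then 0 else if k = m then (if l = 0 then f l else 0)
      else (if l = k then f l else 0)) + (if k = 0 then 1 else -1) * (if l = 0 then 0 else f l / real m))"
    using assms by (intro sum.cong) (auto simp: Qm_def algebra_simps)
  also have "\<dots> = (\<Sum>l<Suc m. (if k = 0 then 0 else if k = m then (if l = 0 then f l else 0)
      else (if l = k then f l else 0))) + (if k = 0 then 1 else -1) * (\<Sum>l<Suc m. (if l = 0 then 0 else f l / real m))"
    by (cases "k = 0") (simp_all add: sum.distrib sum_distrib_left sum_negf sum_subtractf del: sum.lessThan_Suc)
  also have "(\<Sum>l<Suc m. (if k = 0 then 0 else if k = m then (if l = 0 then f l else 0)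
      else (if l = k then f l else 0))) = (if k = 0 then 0 else if k = m then f 0 else f k)"
    using assms by (auto simp: sum.delta')
  also have "(\<Sum>l<Suc m. (if l = 0 then 0 else f l / real m)) = (\<Sum>l<m. f (Suc l)) / real m"
    by (simp add: sum.lessThan_Suc_shift sum_divide_distrib del: sum.lessThan_Suc)
  finally show ?thesis by simp
qed

lemma sumT: assumes "j < Suc m" "m \<ge> 1"
  shows "(\<Sum>l<Suc m. g l * Tm m $$ (l,j)) = g j * Tm m $$ (j,j) + (if j = m then g 0 * bb m else 0)"
proof -
  have "(\<Sum>l<Suc m. g l * Tm m $$ (l,j)) = (\<Sum>l<Suc m. (if l = j then g j * Tm m $$ (j,j) else 0)
     + (if l = 0 then (if j = m then g 0 * bb m else 0) else 0))"
    using assms by (intro sum.cong) (auto simp: Tm_def)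
  also have "\<dots> = g j * Tm m $$ (j,j) + (if j = m then g 0 * bb m else 0)"
    using assms by (simp add: sum.distrib sum.delta')
  finally show ?thesis .
qed

lemma QP: assumes m: "m \<ge> 1" shows "Qm m * Pm m = 1\<^sub>m (Suc m)"
proof (rule eq_matI)
  fix k j assume "k < dim_row (1\<^sub>m (Suc m))" "j < dim_col (1\<^sub>m (Suc m))"
  hence k: "k < Suc m" and j: "j < Suc m" by auto
  have "(Qm m * Pm m) $$ (k,j) = (\<Sum>l<Suc m. Qm m $$ (k,l) * Pm m $$ (l,j))"
    using k j by (simp add: Qm_def Pm_def scalar_prod_def lessThan_atLeast0)
  also have "\<dots> = 1\<^sub>m (Suc m) $$ (k,j)"
    unfolding sumQ[OF k] sumP[OF j m] using k j m by (auto simp: Pm_def)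
  finally show "(Qm m * Pm m) $$ (k,j) = 1\<^sub>m (Suc m) $$ (k,j)" .
qed (auto simp: Qm_def Pm_def)

lemma MP: assumes m: "m \<ge> 1" shows "modularity_mat (star_loop_mat m) * Pm m = Pm m * Tm m"
proof (rule eq_matI)
  fix i j assume "i < dim_row (Pm m * Tm m)" "j < dim_col (Pm m * Tm m)"
  hence i: "i < Suc m" and j: "j < Suc m" by (auto simp: Pm_def Tm_def)
  have "(modularity_mat (star_loop_mat m) * Pm m) $$ (i,j) = (\<Sum>l<Suc m. modularity_mat (star_loop_mat m) $$ (i,l) * Pm m $$ (l,j))"
    using i j M_carr[of m] by (simp add: Pm_def scalar_prod_def lessThan_atLeast0)
  also have "\<dots> = (if i = 0 then sqrt (real m) * Pm m $$ (0,j) + (if j = 0 then real m else 0) else Pm m $$ (0,j) + sqrt (real m) * Pm m $$ (i,j))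
    - dg m i * ((sqrt (real m) + real m) * Pm m $$ (0,j) + (sqrt (real m) + 1) * (if j = 0 then real m else 0)) / DD m"
    unfolding sumM[OF i] sumP[OF j m] ..
  also have "\<dots> = Pm m $$ (i,j) * Tm m $$ (j,j) + (if j = m then Pm m $$ (i,0) * bb m else 0)"
  proof -
    have D: "DD m > 0" using DD_pos[OF m] .
    consider "j = 0" | "j = m" | "j \<noteq> 0" "j \<noteq> m" by auto
    then show ?thesis
    proof cases
      case 1
      have "DD m = (sqrt (real m) + real m) + (sqrt (real m) + 1) * real m" unfolding DD_def by (simp add: algebra_simps)
      then show ?thesis using 1 i j m D by (auto simp: Pm_def Tm_def dg_def)
    next
      case 2
      then show ?thesis using i j m D by (auto simp: Pm_def Tm_def dg_def lam_def bb_def power2_eq_square)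
    next
      case 3
      then show ?thesis using i j m D by (auto simp: Pm_def Tm_def dg_def)
    qed
  qed
  also have "\<dots> = (\<Sum>l<Suc m. Pm m $$ (i,l) * Tm m $$ (l,j))" unfolding sumT[OF j m] ..
  also have "\<dots> = (Pm m * Tm m) $$ (i,j)"
    using i j by (simp add: Tm_def Pm_def scalar_prod_def lessThan_atLeast0)
  finally show "(modularity_mat (star_loop_mat m) * Pm m) $$ (i,j) = (Pm m * Tm m) $$ (i,j)" .
qed (insert M_carr[of m], auto simp: Tm_def Pm_def)


lemma lam_lt: assumes m: "m \<ge> 1" shows "lam m < sqrt (real m)"
proof -
  have D: "DD m > 0" using DD_pos[OF m] .
  have "lam m = sqrt (real m) - 1 + (sqrt (real m) + real m) * (1 - real m) / DD m"
    unfolding lam_def bb_def using D by (simp add: field_simps power2_eq_square)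
  moreover have "(sqrt (real m) + real m) * (1 - real m) / DD m \<le> 0"
    using m D by (intro divide_nonpos_pos mult_nonneg_nonpos) auto
  ultimately show ?thesis by simp
qed

lemma charpoly: assumes m: "m \<ge> 1"
  shows "char_poly (modularity_mat (star_loop_mat m)) = [:0,1:] * [:- sqrt (real m), 1:] ^ (m - 1) * [:- lam m, 1:]"
proof -
  have PQ: "Pm m * Qm m = 1\<^sub>m (Suc m)"
    by (rule mat_mult_left_right_inverse[OF _ _ QP[OF m]]) (auto simp: Pm_def Qm_def)
  have "modularity_mat (star_loop_mat m) = modularity_mat (star_loop_mat m) * (Pm m * Qm m)"
    unfolding PQ using M_carr[of m] by simp
  also have "\<dots> = (modularity_mat (star_loop_mat m) * Pm m) * Qm m"
    using M_carr[of m] by (subst assoc_mult_mat[of _ "Suc m" "Suc m" _ "Suc m" _ "Suc m"]) (auto simp: Pm_def Qm_def)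
  also have "\<dots> = Pm m * Tm m * Qm m" unfolding MP[OF m] ..
  finally have eq: "modularity_mat (star_loop_mat m) = Pm m * Tm m * Qm m" .
  have sim: "similar_mat (modularity_mat (star_loop_mat m)) (Tm m)"
    unfolding similar_mat_def similar_mat_wit_def Let_def
    using eq PQ QP[OF m] M_carr[of m] by (intro exI[of _ "Pm m"] exI[of _ "Qm m"]) (auto simp: Pm_def Qm_def Tm_def)
  have ut: "upper_triangular (Tm m)" unfolding upper_triangular_def Tm_def by auto
  have "char_poly (Tm m) = (\<Prod>a\<leftarrow>diag_mat (Tm m). [:- a, 1:])"
    by (rule char_poly_upper_triangular[OF _ ut, of "Suc m"]) (simp add: Tm_def)
  also have "diag_mat (Tm m) = map (\<lambda>i. Tm m $$ (i,i)) [0..<Suc m]"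
    by (simp add: diag_mat_def Tm_def)
  also have "(\<Prod>a\<leftarrow>map (\<lambda>i. Tm m $$ (i,i)) [0..<Suc m]. [:- a, 1:]) = (\<Prod>i<Suc m. [:- (Tm m $$ (i,i)), 1:])"
    by (simp add: prod.distinct_set_conv_list[symmetric] lessThan_atLeast0 o_def del: upt_Suc)
  also have "\<dots> = [:0,1:] * (\<Prod>i<m. [:- (Tm m $$ (Suc i,Suc i)), 1:])"
    by (simp add: prod.lessThan_Suc_shift Tm_def del: prod.lessThan_Suc)
  also have "(\<Prod>i<m. [:- (Tm m $$ (Suc i,Suc i)), 1:]) = (\<Prod>i<m - 1. [:- (Tm m $$ (Suc i,Suc i)), 1:]) * [:- lam m, 1:]"
  proof -
    have "m = Suc (m - 1)" using m by simp
    then have "(\<Prod>i<m. [:- (Tm m $$ (Suc i,Suc i)), 1:]) = (\<Prod>i<Suc (m-1). [:- (Tm m $$ (Suc i,Suc i)), 1:])" by simp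
    also have "\<dots> = (\<Prod>i<m - 1. [:- (Tm m $$ (Suc i,Suc i)), 1:]) * [:- (Tm m $$ (Suc (m-1),Suc (m-1))), 1:]"
      by (rule prod.lessThan_Suc)
    finally show ?thesis using m by (simp add: Tm_def)
  qed
  also have "(\<Prod>i<m - 1. [:- (Tm m $$ (Suc i,Suc i)), 1:]) = (\<Prod>i<m - 1. [:- sqrt (real m), 1:])"
    by (intro prod.cong) (auto simp: Tm_def)
  also have "\<dots> = [:- sqrt (real m), 1:] ^ (m - 1)" by simp
  finally show ?thesis using char_poly_similar[OF sim] by (simp add: mult.assoc)
qed


theorem mainTheorem6:
  fixes m n :: nat and A M :: "real mat"
  assumes "m \<ge> 2" and "n = m + 1"
    and "A = star_loop_mat m" and "M = modularity_mat A"
  shows "eigenvalue M (sqrt (real m))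
    \<and> (\<forall>\<mu>. eigenvalue M \<mu> \<longrightarrow> \<mu> \<le> sqrt (real m))
    \<and> order (sqrt (real m)) (char_poly M) = m - 1
    \<and> {x \<in> carrier_vec n. M *\<^sub>v x = sqrt (real m) \<cdot>\<^sub>v x}
        = {x \<in> carrier_vec n. x $ 0 = 0 \<and> (\<Sum>i<n. x $ i) = 0}
    \<and> (\<forall>x. eigenvector M x (sqrt (real m)) \<longrightarrow>
          (induced_connected A {i. i < n \<and> x $ i > 0} \<longleftrightarrow> card {i. i < n \<and> x $ i > 0} = 1))"
proof -
  have m: "m \<ge> 1" and m2: "m \<ge> 2" using assms by auto
  have n: "n = Suc m" using assms by simp
  let ?s = "sqrt (real m)"
  have s0: "?s > 0" using m by simp
  have Mc: "M \<in> carrier_mat (Suc m) (Suc m)" using M_carr[of m] assms by simp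
  have cp: "char_poly M = [:0,1:] * [:- ?s, 1:] ^ (m - 1) * [:- lam m, 1:]"
    using charpoly[OF m] assms by simp
  have ev: "eigenvalue M \<mu> \<longleftrightarrow> \<mu> * (\<mu> - ?s) ^ (m - 1) * (\<mu> - lam m) = 0" for \<mu>
    unfolding eigenvalue_root_char_poly[OF Mc] cp by (simp add: algebra_simps)
  have ls: "lam m < ?s" using lam_lt[OF m] .
  have P1: "eigenvalue M ?s" unfolding ev using m2 by simp
  have P2: "\<forall>\<mu>. eigenvalue M \<mu> \<longrightarrow> \<mu> \<le> ?s"
    unfolding ev using s0 ls by auto
  have nz1: "[:0,1::real:] \<noteq> 0" and nz2: "[:- ?s, 1:] ^ (m - 1) \<noteq> 0" and nz3: "[:- lam m, 1:] \<noteq> 0"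
    by auto
  have o1: "order ?s [:0,1::real:] = 0" using order_root[of "[:0,1::real:]" ?s] s0 by auto
  have o3: "order ?s [:- lam m,1::real:] = 0" using order_root[of "[:- lam m,1::real:]" ?s] ls by auto
  have P3: "order ?s (char_poly M) = m - 1"
  proof -
    let ?p1 = "[:0,1::real:]" and ?p2 = "[:- ?s, 1:] ^ (m - 1)" and ?p3 = "[:- lam m, 1:]"
    have a: "?p1 * ?p2 \<noteq> 0" using nz1 nz2 by (simp only: mult_eq_0_iff) simp
    have b: "?p1 * ?p2 * ?p3 \<noteq> 0" using a nz3 by (simp only: mult_eq_0_iff) simp
    have "order ?s (?p1 * ?p2 * ?p3) = order ?s (?p1 * ?p2) + order ?s ?p3" by (rule order_mult[OF b])
    also have "order ?s (?p1 * ?p2) = order ?s ?p1 + order ?s ?p2" by (rule order_mult[OF a])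
    finally show ?thesis unfolding cp o1 o3 order_power_n_n by simp
  qed
  have P4: "{x \<in> carrier_vec n. M *\<^sub>v x = ?s \<cdot>\<^sub>v x} = {x \<in> carrier_vec n. x $ 0 = 0 \<and> (\<Sum>i<n. x $ i) = 0}"
    using eigsp[OF m] assms by auto
  have P5: "induced_connected A {i. i < n \<and> x $ i > 0} \<longleftrightarrow> card {i. i < n \<and> x $ i > 0} = 1"
    if evx: "eigenvector M x ?s" for x
  proof -
    have x: "x \<in> carrier_vec (Suc m)" and xnz: "x \<noteq> 0\<^sub>v (Suc m)" and Mx: "M *\<^sub>v x = ?s \<cdot>\<^sub>v x"
      using evx Mc unfolding eigenvector_def by auto
    have x0: "x $ 0 = 0" and xs: "(\<Sum>i<Suc m. x $ i) = 0" using eigsp[OF m x] Mx assms by auto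
    define S where "S = {i. i < n \<and> x $ i > 0}"
    have Sne: "S \<noteq> {}"
    proof
      assume "S = {}"
      hence le: "\<forall>i<Suc m. x $ i \<le> 0" unfolding S_def n by force
      have "\<forall>i\<in>{..<Suc m}. - x $ i = 0"
        using sum_nonneg_eq_0_iff[of "{..<Suc m}" "\<lambda>i. - x $ i"] le xs by (simp add: sum_negf)
      hence "x = 0\<^sub>v (Suc m)" using x by (intro eq_vecI) auto
      with xnz show False by simp
    qed
    have R: "{(a, b). a \<in> S \<and> b \<in> S \<and> a \<noteq> b \<and> A $$ (a, b) > 0} = {}"
    proof -
      have "A $$ (a, b) = 0" if "a \<in> S" "b \<in> S" "a \<noteq> b" for a b
      proof -
        have xa: "x $ a > 0" "x $ b > 0" "a < Suc m" "b < Suc m" using that unfolding S_def n by auto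
        have "a \<noteq> 0" "b \<noteq> 0" using xa(1,2) x0 by (metis less_irrefl)+
        then show ?thesis using that xa assms by (simp add: star_loop_mat_def)
      qed
      then show ?thesis by force
    qed
    have "induced_connected A S \<longleftrightarrow> (\<forall>i\<in>S. \<forall>j\<in>S. i = j)"
      unfolding induced_connected_def R using Sne by simp
    also have "\<dots> \<longleftrightarrow> card S = 1"
    proof
      assume "\<forall>i\<in>S. \<forall>j\<in>S. i = j"
      with Sne obtain a where "S = {a}" by blast
      then show "card S = 1" by simp
    next
      assume "card S = 1"
      then obtain a where "S = {a}" by (auto simp: card_1_singleton_iff)
      then show "\<forall>i\<in>S. \<forall>j\<in>S. i = j" by simp
    qed
    finally show ?thesis unfolding S_def .
  qed
  show ?thesis using P1 P2 P3 P4 P5 by blast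
qed

end
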